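(* Let $\nu$ be a semi-neutral probability measure on $\mathrm{Mat}(m,\mathbb C)$ with compact support, and suppose that for $\mu$-almost every $\omega$ the family $\{M^n_\omega\}_n$ is bounded. Then every $A\in S_\nu=\{M^n_\omega:\omega\in\Omega,n\in\mathbb N\}$ satisfies $\|A\|\ge1$ (operator norm).
   Context: $\Omega=\mathrm{supp}(\nu)^{\mathbb N}$, $\mu=\nu^{\otimes\mathbb N}$; for $\omega=(M_1,M_2,\dots)$, $M^n_\omega=M_n\cdots M_1$. Semi-neutral: the Lyapunov indices $\kappa_1>\dots>\kappa_s$ with multiplicities $\alpha_i$ (Oseledets: a.s. $((M^n_\omega)^*M^n_\omega)^{1/(2n)}$ converges to a Hermitian matrix with eigenvalues $e^{\kappa_i}$, multiplicity $\alpha_i$) satisfy $\kappa_1=0$ and $\alpha_1\neq m$ (equivalently $\lim\frac1n\log\|M^n_\omega\|=0$ a.s. and $\mathbb E\log|\det M_1|<0$). *)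

theory Defs
  imports "HOL-Probability.Probability"
begin

type_synonym 'm cmat = "complex ^'m ^'m"

definition opnorm :: "'m::finite cmat \<Rightarrow> real" where
  "opnorm A = onorm (\<lambda>x::complex^'m. A *v x)"

text \<open>Left products: prod_mat w n = M_n ... M_1 where M_(k+1) = w k.\<close>
fun prod_mat :: "(nat \<Rightarrow> 'm::finite cmat) \<Rightarrow> nat \<Rightarrow> 'm cmat" where
  "prod_mat w 0 = mat 1"
| "prod_mat w (Suc n) = w n ** prod_mat w n"

definition mat_support :: "'m::finite cmat measure \<Rightarrow> 'm cmat set" where
  "mat_support \<nu> = {A. \<forall>U. open U \<and> A \<in> U \<longrightarrow> emeasure \<nu> U > 0}"

definition iid :: "'m::finite cmat measure \<Rightarrow> (nat \<Rightarrow> 'm cmat) measure" where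
  "iid \<nu> = PiM UNIV (\<lambda>_. \<nu>)"

text \<open>Positive and negative parts of log|det A| (with log 0 = -infinity).\<close>
definition logdet_pos :: "'m::finite cmat \<Rightarrow> ennreal" where
  "logdet_pos A = (if det A = 0 then 0 else ennreal (max 0 (ln (cmod (det A)))))"
definition logdet_neg :: "'m::finite cmat \<Rightarrow> ennreal" where
  "logdet_neg A = (if det A = 0 then \<infinity> else ennreal (max 0 (- ln (cmod (det A)))))"

text \<open>Semi-neutral: top Lyapunov index kappa_1 = 0 (a.s. (1/n) log ||M^n|| -> 0,
  with log 0 = -infinity) and alpha_1 \<noteq> m, i.e. E log|det M_1| < 0.\<close>
definition semi_neutral :: "'m::finite cmat measure \<Rightarrow> bool" where
  "semi_neutral \<nu> \<longleftrightarrow>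
     (AE w in iid \<nu>. (\<forall>n. opnorm (prod_mat w n) > 0) \<and>
        (\<lambda>n. ln (opnorm (prod_mat w n)) / real n) \<longlonglongrightarrow> 0)
   \<and> (\<integral>\<^sup>+ A. logdet_pos A \<partial>\<nu>) < (\<integral>\<^sup>+ A. logdet_neg A \<partial>\<nu>)"

definition S_set :: "'m::finite cmat measure \<Rightarrow> 'm cmat set" where
  "S_set \<nu> = {prod_mat w n | w n. (\<forall>k. w k \<in> mat_support \<nu>)}"

end

theory Submission
  imports Defs
begin

lemma bl_mv: "bounded_linear ((*v) (A::'m::finite cmat))"
  by simp

lemma opnorm_nonneg: "opnorm A \<ge> 0"
  unfolding opnorm_def by (rule onorm_pos_le) (rule bl_mv)

lemma opnorm_mult: "opnorm (A ** B) \<le> opnorm A * opnorm (B::'m::finite cmat)"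
proof -
  have "(\<lambda>x. (A ** B) *v x) = ((*v) A) \<circ> ((*v) B)"
    by (auto simp: matrix_vector_mul_assoc)
  then show ?thesis unfolding opnorm_def
    using onorm_compose[OF bl_mv[of A] bl_mv[of B]] by simp
qed

lemma nthle: "norm ((x::complex^'m::finite) $ i) \<le> norm x"
  by (rule Finite_Cartesian_Product.norm_nth_le)
lemma nthle2: "norm ((A::'m::finite cmat) $ i $ j) \<le> norm A"
  by (rule order_trans[OF Finite_Cartesian_Product.norm_nth_le Finite_Cartesian_Product.norm_nth_le])

lemma opnorm_le_sum: "opnorm (A::'m::finite cmat) \<le> (\<Sum>i\<in>UNIV. \<Sum>j\<in>UNIV. norm (A $ i $ j))"
  unfolding opnorm_def
proof (rule onorm_le)
  fix x :: "complex^'m"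
  have "norm (A *v x) \<le> (\<Sum>i\<in>UNIV. norm ((A *v x) $ i))"
    by (simp add: norm_vec_def L2_set_le_sum)
  also have "\<dots> \<le> (\<Sum>i\<in>UNIV. \<Sum>j\<in>UNIV. norm (A $ i $ j) * norm x)"
  proof (rule sum_mono)
    fix i
    have "norm ((A *v x) $ i) = norm (\<Sum>j\<in>UNIV. A $ i $ j * x $ j)"
      by (simp add: matrix_vector_mult_def)
    also have "\<dots> \<le> (\<Sum>j\<in>UNIV. norm (A $ i $ j * x $ j))"
      by (rule norm_sum)
    also have "\<dots> \<le> (\<Sum>j\<in>UNIV. norm (A $ i $ j) * norm x)"
      unfolding norm_mult by (intro sum_mono mult_left_mono) (auto simp: nthle)
    finally show "norm ((A *v x) $ i) \<le> (\<Sum>j\<in>UNIV. norm (A $ i $ j) * norm x)" .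
  qed
  finally show "norm (A *v x) \<le> (\<Sum>i\<in>UNIV. \<Sum>j\<in>UNIV. norm (A $ i $ j)) * norm x"
    by (simp add: sum_distrib_right)
qed

definition cst :: "'m::finite itself \<Rightarrow> real" where "cst _ = real CARD('m) * real CARD('m)"

lemma opnorm_le_norm: "opnorm (A::'m::finite cmat) \<le> real CARD('m) * real CARD('m) * norm A"
proof -
  have "(\<Sum>i\<in>UNIV. \<Sum>j\<in>UNIV. norm (A $ i $ j)) \<le> (\<Sum>i::'m\<in>UNIV. \<Sum>j::'m\<in>UNIV. norm A)"
    by (intro sum_mono) (simp add: nthle2)
  then show ?thesis using opnorm_le_sum[of A] by simp
qed

lemma opnorm_diff: "opnorm (A::'m::finite cmat) \<le> opnorm B + opnorm (A - B)"
proof -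
  have "(\<lambda>x. A *v x) = (\<lambda>x. B *v x + (A - B) *v x)"
    by (auto simp: matrix_vector_mult_diff_rdistrib)
  then show ?thesis unfolding opnorm_def
    using onorm_triangle[OF bl_mv[of B] bl_mv[of "A - B"]] by simp
qed

lemma opnorm_one: "opnorm (mat 1 :: 'm::finite cmat) = 1"
proof -
  have "(*v) (mat 1 :: 'm cmat) = (\<lambda>x. x)" by (rule ext) simp
  then show ?thesis unfolding opnorm_def by (simp add: onorm_id)
qed

lemma opnorm_lip: "\<bar>opnorm (A::'m::finite cmat) - opnorm B\<bar> \<le> real CARD('m) * real CARD('m) * dist A B"
  using opnorm_diff[of A B] opnorm_diff[of B A] opnorm_le_norm[of "A - B"] opnorm_le_norm[of "B - A"]
  by (simp add: dist_norm norm_minus_commute abs_le_iff)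

lemma continuous_opnorm: "continuous_on UNIV (opnorm :: 'm::finite cmat \<Rightarrow> real)"
proof -
  define c where "c = real CARD('m) * real CARD('m)"
  have c: "c > 0" unfolding c_def by simp
  show ?thesis
    unfolding continuous_on_iff
  proof (intro ballI allI impI)
    fix x :: "'m cmat" and e :: real assume "e > 0"
    show "\<exists>d>0. \<forall>x'\<in>UNIV. dist x' x < d \<longrightarrow> dist (opnorm x') (opnorm x) < e"
      using opnorm_lip c \<open>e>0\<close>
      by (intro exI[of _ "e / c"]) (auto simp: dist_real_def c_def field_simps intro: le_less_trans)
  qed
qed

definition shft :: "nat \<Rightarrow> (nat \<Rightarrow> 'a) \<Rightarrow> (nat \<Rightarrow> 'a)" where
  "shft k w = (\<lambda>i. w (i + k))"

lemma shft_apply[simp]: "shft k w i = w (i + k)" by (simp add: shft_def)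

lemma prod_mat_add: "prod_mat w (k + n) = prod_mat (shft k w) n ** prod_mat w k"
  by (induction n) (auto simp: matrix_mul_assoc add.commute)

lemma prod_mat_cong: "(\<And>i. i < n \<Longrightarrow> w i = v i) \<Longrightarrow> prod_mat w n = prod_mat v n"
  by (induction n) auto

lemma opnorm_add: "opnorm ((A::'m::finite cmat) + B) \<le> opnorm A + opnorm B"
  using opnorm_diff[of "A + B" A] by simp

lemma mm_diff_r: "((A::'m::finite cmat) - B) ** C = A ** C - B ** C"
  by (simp add: matrix_matrix_mult_def vec_eq_iff sum_subtractf[symmetric] algebra_simps)
lemma mm_diff_l: "(A::'m::finite cmat) ** (B - C) = A ** B - A ** C"
  by (simp add: matrix_matrix_mult_def vec_eq_iff sum_subtractf[symmetric] algebra_simps)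

lemma mult_cont: "continuous_on UNIV (\<lambda>x. fst x ** snd x :: 'm::finite cmat)"
  unfolding matrix_matrix_mult_def
  by (intro continuous_intros)

lemma prod_mat_meas:
  fixes M :: "'a measure" and w :: "'a \<Rightarrow> nat \<Rightarrow> 'm::finite cmat"
  assumes "\<And>i. (\<lambda>x. w x i) \<in> borel_measurable M"
  shows "(\<lambda>x. prod_mat (w x) n) \<in> borel_measurable M"
proof (induction n)
  case 0 then show ?case by simp
next
  case (Suc n)
  show ?case
    using borel_measurable_continuous_Pair[OF assms[of n] Suc mult_cont] by simp
qed

lemma opnorm_meas[measurable]: "opnorm \<in> borel_measurable (borel :: 'm::finite cmat measure)"
  by (rule borel_measurable_continuous_onI[OF continuous_opnorm])

lemma prod_mat_close:
  fixes w0 :: "nat \<Rightarrow> 'm::finite cmat"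
  shows "\<forall>e>0. \<exists>d>0. \<forall>w. (\<forall>i<n. opnorm (w i - w0 i) < d) \<longrightarrow> opnorm (prod_mat w n - prod_mat w0 n) < e"
proof (induction n)
  case 0 then show ?case by (auto intro: exI[of _ 1] simp: opnorm_def onorm_zero)
next
  case (Suc n)
  show ?case
  proof (intro allI impI)
    fix e :: real assume e: "e > 0"
    define a where "a = opnorm (w0 n)"
    define b where "b = opnorm (prod_mat w0 n)"
    have a: "a \<ge> 0" and b: "b \<ge> 0" unfolding a_def b_def by (auto simp: opnorm_nonneg)
    define h where "h = min 1 (e / (a + b + 2))"
    have p: "a + b + 2 > 0" using a b by simp
    have h1: "h > 0" "h \<le> 1" using a b e p by (auto simp: h_def)
    have "h * (a + b + 2) \<le> (e / (a + b + 2)) * (a + b + 2)"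
      using p by (intro mult_right_mono) (auto simp: h_def)
    also have "\<dots> = e" using p by simp
    finally have h: "h > 0" "h \<le> 1" "h * (a + b + 2) \<le> e" using h1 by auto
    obtain d where d: "d > 0" "\<And>w. (\<forall>i<n. opnorm (w i - w0 i) < d) \<Longrightarrow> opnorm (prod_mat w n - prod_mat w0 n) < h"
      using Suc h(1) by blast
    show "\<exists>d>0. \<forall>w. (\<forall>i<Suc n. opnorm (w i - w0 i) < d) \<longrightarrow> opnorm (prod_mat w (Suc n) - prod_mat w0 (Suc n)) < e"
    proof (intro exI[of _ "min d h"] conjI allI impI)
      show "min d h > 0" using d h by simp
      fix w assume w: "\<forall>i<Suc n. opnorm (w i - w0 i) < min d h"
      define X where "X = w n" define X0 where "X0 = w0 n"
      define Y where "Y = prod_mat w n" define Y0 where "Y0 = prod_mat w0 n"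
      have hx: "opnorm (X - X0) < h" using w unfolding X_def X0_def by auto
      have hy: "opnorm (Y - Y0) < h" unfolding Y_def Y0_def using w by (intro d(2)) auto
      have eq: "X ** Y - X0 ** Y0 = (X - X0) ** Y + X0 ** (Y - Y0)"
        by (simp add: mm_diff_r mm_diff_l)
      have "opnorm (X ** Y - X0 ** Y0) \<le> opnorm (X - X0) * opnorm Y + opnorm X0 * opnorm (Y - Y0)"
        unfolding eq by (rule order_trans[OF opnorm_add add_mono[OF opnorm_mult opnorm_mult]])
      also have "opnorm Y \<le> b + h" using opnorm_diff[of Y Y0] hy unfolding b_def Y0_def by simp
      then have "opnorm (X - X0) * opnorm Y \<le> h * (b + 1)"
        using hx h opnorm_nonneg[of "X - X0"] opnorm_nonneg[of Y] by (intro mult_mono) auto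
      then have "opnorm (X - X0) * opnorm Y + opnorm X0 * opnorm (Y - Y0) \<le> h * (b + 1) + a * h"
        using hy a unfolding a_def X0_def by (intro add_mono mult_left_mono) auto
      also have "\<dots> = h * (a + b + 1)" by (simp add: algebra_simps)
      also have "\<dots> < h * (a + b + 2)" using h(1) by simp
      also have "\<dots> \<le> e" using h(3) .
      finally show "opnorm (prod_mat w (Suc n) - prod_mat w0 (Suc n)) < e"
        by (simp add: X_def X0_def Y_def Y0_def)
    qed
  qed
qed

lemma card_window: "card {j::nat. N < j + L \<and> j \<le> N} \<le> L"
proof -
  have "{j::nat. N < j + L \<and> j \<le> N} \<subseteq> {Suc N - L ..< Suc N}" by auto
  then have "card {j::nat. N < j + L \<and> j \<le> N} \<le> card {Suc N - L ..< Suc N}"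
    by (intro card_mono) auto
  then show ?thesis by simp
qed

lemma chain_bound:
  fixes f :: "nat \<Rightarrow> real" and sel :: "nat \<Rightarrow> bool"
  assumes L: "L \<ge> 1"
    and fb: "\<And>N. f N \<le> C0" and C0: "C0 \<ge> 0"
    and step: "\<And>j N. sel j \<Longrightarrow> j + L \<le> N \<Longrightarrow> f N \<le> f j / 2"
  shows "f N \<le> C0 * (1/2) ^ (card {j. j + L \<le> N \<and> sel j} div L)"
proof (induction N rule: less_induct)
  case (less N)
  define S where "S = {j. j + L \<le> N \<and> sel j}"
  have finS: "finite S" unfolding S_def by (rule finite_subset[of _ "{..N}"]) auto
  show ?case
  proof (cases "S = {}")
    case True
    then have "card {j. j + L \<le> N \<and> sel j} = 0" using True unfolding S_def by (metis card.empty)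
    then show ?thesis using fb[of N] by simp
  next
    case False
    define j where "j = Max S"
    have jS: "j \<in> S" using False finS unfolding j_def by simp
    have jmax: "\<And>j'. j' \<in> S \<Longrightarrow> j' \<le> j" using finS unfolding j_def by simp
    have jN: "j < N" using jS L unfolding S_def by auto
    define T where "T = {j'. j' + L \<le> j \<and> sel j'}"
    have finT: "finite T" unfolding T_def by (rule finite_subset[of _ "{..j}"]) auto
    have sub: "S \<subseteq> T \<union> {j'. j < j' + L \<and> j' \<le> j}"
    proof
      fix x assume xS: "x \<in> S"
      then have "x \<le> j" by (rule jmax)
      with xS show "x \<in> T \<union> {j'. j < j' + L \<and> j' \<le> j}" unfolding S_def T_def by auto
    qed
    have "card S \<le> card (T \<union> {j'. j < j' + L \<and> j' \<le> j})"
      by (intro card_mono sub) (use finT in auto)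
    also have "\<dots> \<le> card T + card {j'. j < j' + L \<and> j' \<le> j}"
      by (rule card_Un_le)
    also have "\<dots> \<le> card T + L" using card_window[of j L] by simp
    finally have cST: "card S \<le> card T + L" .
    have "card S div L \<le> (card T + L) div L" by (rule div_le_mono[OF cST])
    also have "(card T + L) div L = card T div L + 1" using L by simp
    finally have dv: "card S div L \<le> card T div L + 1" .
    have "f N \<le> f j / 2" using step[of j N] jS unfolding S_def by auto
    also have "\<dots> \<le> C0 * (1/2) ^ (card T div L) / 2"
      using less[OF jN] unfolding T_def by simp
    also have "\<dots> = C0 * (1/2) ^ (card T div L + 1)" by simp
    also have "\<dots> \<le> C0 * (1/2) ^ (card S div L)"
      using C0 by (intro mult_left_mono power_decreasing dv) auto
    finally show ?thesis unfolding S_def .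
  qed
qed

lemma det_contra:
  fixes f :: "nat \<Rightarrow> real" and sel :: "nat \<Rightarrow> bool"
  assumes L: "L \<ge> 1"
    and fpos: "\<And>N. f N > 0"
    and fb: "\<And>N. f N \<le> C0"
    and step: "\<And>j N. sel j \<Longrightarrow> j + L \<le> N \<Longrightarrow> f N \<le> f j / 2"
    and s: "s > 0"
    and lim: "(\<lambda>N. ln (f N) / real N) \<longlonglongrightarrow> 0"
    and freq: "\<And>M. \<exists>N\<ge>M. real (card {j. j < N \<and> sel j}) \<ge> s * real N / 2"
  shows False
proof -
  have C0: "C0 > 0" using fpos[of 0] fb[of 0] by simp
  define \<eta> where "\<eta> = s * ln 2 / (4 * real L)"
  have eta: "\<eta> > 0" unfolding \<eta>_def using s L by simp
  define B where "B = ln C0 + 2 * ln 2"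
  obtain M1 where M1: "\<And>n. n \<ge> M1 \<Longrightarrow> norm (ln (f n) / real n - 0) < \<eta>"
    using LIMSEQ_D[OF lim eta] by blast
  define M2 where "M2 = nat \<lceil>\<bar>B\<bar> / \<eta>\<rceil> + 1"
  obtain N where N: "N \<ge> max M1 M2" and cN: "real (card {j. j < N \<and> sel j}) \<ge> s * real N / 2"
    using freq by blast
  have N1: "real N > \<bar>B\<bar> / \<eta>" using N unfolding M2_def by linarith
  have Npos: "real N > 0" proof -
    have "\<bar>B\<bar> / \<eta> \<ge> 0" using eta by simp
    then show ?thesis using N1 by linarith
  qed
  define c where "c = card {j. j + L \<le> N \<and> sel j}"
  define c' where "c' = card {j. j < N \<and> sel j}"
  have "{j. j < N \<and> sel j} \<subseteq> {j. j + L \<le> N \<and> sel j} \<union> {j. N < j + L \<and> j \<le> N}"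
    by auto
  then have "c' \<le> card ({j. j + L \<le> N \<and> sel j} \<union> {j. N < j + L \<and> j \<le> N})"
    unfolding c'_def by (intro card_mono) (auto intro: finite_subset[of _ "{..N}"])
  also have "\<dots> \<le> c + card {j. N < j + L \<and> j \<le> N}" unfolding c_def by (rule card_Un_le)
  finally have cc: "real c' \<le> real c + real L" using card_window[of N L] by linarith
  have "real c < real L * (real (c div L) + 1)"
  proof -
    have e1: "c = L * (c div L) + c mod L" by simp
    have e2: "c mod L < L" using L by simp
    have e3: "L * (c div L + 1) = L * (c div L) + L" by (simp add: algebra_simps)
    have "c < L * (c div L + 1)" using e1 e2 e3 by linarith
    then show ?thesis by (metis of_nat_add of_nat_less_iff of_nat_mult of_nat_1)
  qed
  then have "real c / real L < real (c div L) + 1" using L by (simp add: divide_less_eq mult.commute)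
  moreover have "real c \<ge> s * real N / 2 - real L" using cc cN unfolding c'_def by linarith
  then have "real c / real L \<ge> (s * real N / 2 - real L) / real L" by (rule divide_right_mono) auto
  moreover have "(s * real N / 2 - real L) / real L = s * real N / (2 * real L) - 1"
    using L by (simp add: field_simps)
  ultimately have kk: "real (c div L) \<ge> s * real N / (2 * real L) - 2" by linarith
  have fN: "f N \<le> C0 * (1/2) ^ (c div L)"
    unfolding c_def by (rule chain_bound[OF L fb _ step]) (use C0 in auto)
  have "ln (f N) \<le> ln (C0 * (1/2) ^ (c div L))"
    using fpos[of N] fN by simp
  also have "\<dots> = ln C0 - real (c div L) * ln 2"
    using C0 by (simp add: ln_mult ln_realpow ln_div)
  also have "\<dots> \<le> ln C0 - (s * real N / (2 * real L) - 2) * ln 2"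
    using kk by (intro diff_left_mono mult_right_mono) auto
  also have "\<dots> = B - real N * (2 * \<eta>)"
    unfolding B_def \<eta>_def using L by (simp add: field_simps)
  finally have lnf: "ln (f N) \<le> B - real N * (2 * \<eta>)" .
  have "B < real N * \<eta>" using N1 eta by (simp add: divide_less_eq mult.commute) 
  then have "ln (f N) < - (real N * \<eta>)" using lnf by linarith
  then have "ln (f N) / real N < - \<eta>" using Npos by (simp add: divide_less_eq mult.commute)
  moreover have "norm (ln (f N) / real N - 0) < \<eta>" using M1 N by auto
  ultimately show False by (simp only: real_norm_def diff_zero)
qed

lemma seqsp: "prob_space \<nu> \<Longrightarrow> sequence_space \<nu>"
  unfolding sequence_space_def product_prob_space_def product_sigma_finite_def product_prob_space_axioms_def
  by (auto intro: prob_space_imp_sigma_finite)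

lemma space_iid: "sets \<nu> = sets borel \<Longrightarrow> space (iid \<nu>) = UNIV"
  unfolding iid_def by (auto simp: space_PiM sets_eq_imp_space_eq[of \<nu> borel])

lemma shft_meas: "shft k \<in> measurable (iid \<nu>) (iid \<nu>)"
  unfolding iid_def shft_def
  by (rule measurable_PiM_single') (auto simp: space_PiM PiE_iff)

lemma split_measure:
  assumes P: "prob_space \<nu>"
    and X: "X \<in> sets (iid \<nu>)" and Xpre: "\<And>a b. (\<And>i. i < k \<Longrightarrow> a i = b i) \<Longrightarrow> a \<in> X \<longleftrightarrow> b \<in> X"
    and Y: "Y \<in> sets (iid \<nu>)"
  shows "measure (iid \<nu>) {\<omega> \<in> space (iid \<nu>). \<omega> \<in> X \<and> shft k \<omega> \<in> Y} = measure (iid \<nu>) X * measure (iid \<nu>) Y"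
proof -
  interpret sequence_space \<nu> using seqsp[OF P] .
  have SS: "iid \<nu> = S" unfolding iid_def ..
  define Z where "Z = {\<omega> \<in> space S. \<omega> \<in> X \<and> shft k \<omega> \<in> Y}"
  have Zs: "Z \<in> sets S" unfolding Z_def
    using X Y shft_meas[of k \<nu>] unfolding SS
    by (intro sets.sets_Collect_conj) (auto intro: sets.sets_Collect_const measurable_sets[of _ S S])
  have "measure S Z = measure (distr (S \<Otimes>\<^sub>M S) S (\<lambda>(\<omega>, \<omega>'). comb_seq k \<omega> \<omega>')) Z"
    using PiM_comb_seq[of k] by simp
  also have "\<dots> = measure (S \<Otimes>\<^sub>M S) ((\<lambda>(\<omega>, \<omega>'). comb_seq k \<omega> \<omega>') -` Z \<inter> space (S \<Otimes>\<^sub>M S))"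
    by (rule measure_distr[OF measurable_comb_seq Zs])
  also have "(\<lambda>(\<omega>, \<omega>'). comb_seq k \<omega> \<omega>') -` Z \<inter> space (S \<Otimes>\<^sub>M S) = X \<times> Y"
  proof -
    have sh: "shft k (comb_seq k a b) = b" for a b
      by (rule ext) (simp add: comb_seq_add)
    have pre: "comb_seq k a b \<in> X \<longleftrightarrow> a \<in> X" for a b
      by (rule Xpre) (simp add: comb_seq_less)
    have cs: "a \<in> space S \<Longrightarrow> b \<in> space S \<Longrightarrow> comb_seq k a b \<in> space S" for a b
      using measurable_space[OF measurable_comb_seq[where i=k and M=\<nu>], of "(a, b)"] by (simp add: space_pair_measure)
    show ?thesis
      using sets.sets_into_space[OF X] sets.sets_into_space[OF Y] unfolding SS Z_def
      by (auto simp: space_pair_measure sh pre cs)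
  qed
  also have "measure (S \<Otimes>\<^sub>M S) (X \<times> Y) = measure S X * measure S Y"
    using X Y unfolding SS measure_def
    by (simp add: P.emeasure_pair_measure_Times enn2real_mult)
  finally show ?thesis unfolding Z_def SS .
qed

lemma card_sum_ind: "(\<Sum>j<(N::nat). if P j then 1 else 0 :: real) = real (card {j. j < N \<and> P j})"
proof (induction N)
  case 0 then show ?case by simp
next
  case (Suc N)
  have "{j. j < Suc N \<and> P j} = {j. j < N \<and> P j} \<union> (if P N then {N} else {})" by (auto simp: less_Suc_eq)
  then show ?case using Suc by (auto simp: card_insert_if)
qed

lemma card_le_N: "card {j. j < N \<and> P j} \<le> N"
  using card_mono[of "{..<N}" "{j. j < N \<and> P j}"] by auto

theorem mainTheorem9:
  fixes \<nu> :: "('m::finite) cmat measure"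
  assumes "prob_space \<nu>"
    and "sets \<nu> = sets borel"
    and "compact (mat_support \<nu>)"
    and "semi_neutral \<nu>"
    and "AE w in iid \<nu>. bounded (range (\<lambda>n. prod_mat w n))"
    and "A \<in> S_set \<nu>"
  shows "opnorm A \<ge> 1"
proof (rule ccontr)
  assume "\<not> opnorm A \<ge> 1"
  then have q1: "opnorm A < 1" by simp
  note Pnu = assms(1) and sb = assms(2)
  interpret sequence_space \<nu> using seqsp[OF Pnu] .
  interpret nu: prob_space \<nu> by (rule Pnu)
  have SS: "iid \<nu> = S" unfolding iid_def ..
  have spS: "space S = UNIV" using space_iid[OF sb] unfolding SS .
  have spnu: "space \<nu> = UNIV" using sets_eq_imp_space_eq[OF sb] by simp
  define c where "c = real CARD('m) * real CARD('m)"
  have cpos: "c > 0" unfolding c_def by simp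
  have opn: "opnorm B \<le> c * norm B" for B :: "'m cmat" unfolding c_def by (rule opnorm_le_norm)
  obtain w0 n0 where A: "A = prod_mat w0 n0" and w0: "\<And>k. w0 k \<in> mat_support \<nu>"
    using assms(6) unfolding S_set_def by blast
  have n0: "n0 \<ge> 1"
  proof (rule ccontr)
    assume "\<not> n0 \<ge> 1" then have "n0 = 0" by simp
    then have "A = mat 1" using A by simp
    then show False using q1 opnorm_one[where 'm='m] by simp
  qed
  have mcomp[measurable]: "(\<lambda>\<omega>. \<omega> i) \<in> borel_measurable S" for i
  proof -
    have "(\<lambda>\<omega>. \<omega> i) \<in> measurable S \<nu>" by (rule measurable_component_singleton) simp
    also have "measurable S \<nu> = borel_measurable S" by (rule measurable_cong_sets[OF refl sb])
    finally show ?thesis .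
  qed
  have mprod[measurable]: "(\<lambda>\<omega>. prod_mat \<omega> n) \<in> borel_measurable S" for n
    by (rule prod_mat_meas) simp
  have mop[measurable]: "(\<lambda>\<omega>. opnorm (prod_mat \<omega> n)) \<in> borel_measurable S" for n
    by measurable
  have mshft[measurable]: "shft k \<in> measurable S S" for k
    using shft_meas[of k \<nu>] unfolding SS .
  define G where "G K = {\<omega> \<in> space S. \<forall>n. opnorm (prod_mat \<omega> n) \<le> real K}" for K :: nat
  have Gs[measurable]: "G K \<in> sets S" for K unfolding G_def by measurable
  obtain K where gpos: "measure S (G K) > 0"
  proof -
    have "AE \<omega> in S. \<omega> \<in> (\<Union>K. G K)"
      using assms(5) unfolding SS
    proof (rule AE_mp[OF _ AE_I2[OF impI]])
      fix \<omega> :: "nat \<Rightarrow> 'm cmat" assume "bounded (range (prod_mat \<omega>))"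
      then obtain a where a: "\<And>n. norm (prod_mat \<omega> n) \<le> a" unfolding bounded_iff by auto
      define K where "K = nat \<lceil>c * a\<rceil>"
      have "opnorm (prod_mat \<omega> n) \<le> real K" for n
        using opn[of "prod_mat \<omega> n"] a[of n] cpos unfolding K_def
        by (smt (verit) mult_left_mono real_nat_ceiling_ge)
      then show "\<omega> \<in> (\<Union>K. G K)" unfolding G_def spS by auto
    qed
    then have "prob (\<Union>K. G K) = 1" by (subst AE_in_set_eq_1[symmetric]) auto
    moreover
    have "\<exists>K. measure S (G K) > 0"
    proof (rule ccontr)
      assume "\<not> (\<exists>K. measure S (G K) > 0)"
      then have "\<And>K. emeasure S (G K) = 0"
        by (metis emeasure_eq_measure ennreal_0 measure_nonneg order_less_le)
      then have "emeasure S (\<Union>K. G K) \<le> 0"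
      proof -
        have rg: "range G \<subseteq> sets S" using Gs by blast
        show ?thesis using emeasure_subadditive_countably[OF rg] \<open>\<And>K. emeasure S (G K) = 0\<close> by simp
      qed
      then have "prob (\<Union>K. G K) = 0" by (simp add: emeasure_eq_measure)
      then show False using calculation by simp
    qed
    then show ?thesis using that by blast
  qed
  have Kpos: "K \<ge> 1"
  proof (rule ccontr)
    assume "\<not> K \<ge> 1" then have "K = 0" by simp
    have "G K = {}"
    proof safe
      fix x assume "x \<in> G K"
      then have "\<forall>n. opnorm (prod_mat x n) \<le> real K" unfolding G_def by blast
      then have "opnorm (prod_mat x 0) \<le> real K" by (rule spec)
      then show "x \<in> {}" using opnorm_one[where 'm='m] \<open>K = 0\<close> by simp
    qed
    then show False using gpos by simp
  qed
  define Kr where "Kr = real K"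
  have Kr: "Kr \<ge> 1" unfolding Kr_def using Kpos by simp
  define q where "q = opnorm A"
  have q: "0 \<le> q" "q < 1" using q1 opnorm_nonneg unfolding q_def by auto
  obtain r where r: "q ^ r < 1 / (4 * Kr)"
  proof -
    have "(\<lambda>n. q ^ n) \<longlonglongrightarrow> 0" using q by (intro LIMSEQ_power_zero) simp
    moreover have "1 / (4 * Kr) > 0" using Kr by simp
    ultimately obtain r where "norm (q ^ r - 0) < 1 / (4 * Kr)" using LIMSEQ_D by blast
    then show ?thesis using that q by simp
  qed
  have r1: "r \<ge> 1"
  proof (rule ccontr)
    assume "\<not> r \<ge> 1" then have "r = 0" by simp
    then show False using r Kr by (simp add: field_simps)
  qed
  define w1 where "w1 i = w0 (i mod n0)" for i
  define L where "L = r * n0"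
  have L1: "L \<ge> 1" unfolding L_def using r1 n0 by simp
  have w1pow: "opnorm (prod_mat w1 (t * n0)) \<le> q ^ t" for t
  proof (induction t)
    case 0 then show ?case using opnorm_one[where 'm='m] by simp
  next
    case (Suc t)
    have "prod_mat (shft (t * n0) w1) n0 = prod_mat w0 n0"
      by (rule prod_mat_cong) (simp add: w1_def)
    then have "prod_mat w1 (Suc t * n0) = A ** prod_mat w1 (t * n0)"
      using prod_mat_add[of w1 "t * n0" n0] A by (simp add: add.commute)
    then have "opnorm (prod_mat w1 (Suc t * n0)) \<le> q * opnorm (prod_mat w1 (t * n0))"
      using opnorm_mult unfolding q_def by simp
    also have "\<dots> \<le> q * q ^ t" using Suc q by (intro mult_left_mono) auto
    finally show ?case by simp
  qed
  have w1L: "opnorm (prod_mat w1 L) < 1 / (4 * Kr)"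
    using w1pow[of r] r unfolding L_def by (simp add: mult.commute)
  obtain d where d: "d > 0" and dclose: "\<And>w. (\<forall>i<L. opnorm (w i - w1 i) < d) \<Longrightarrow> opnorm (prod_mat w L - prod_mat w1 L) < 1 / (4 * Kr)"
  proof -
    have e: "1 / (4 * Kr) > 0" using Kr by simp
    have "\<exists>d>0. \<forall>w. (\<forall>i<L. opnorm (w i - w1 i) < d) \<longrightarrow> opnorm (prod_mat w L - prod_mat w1 L) < 1 / (4 * Kr)"
      using prod_mat_close[of L w1] e by blast
    then show ?thesis using that by blast
  qed
  define \<rho> where "\<rho> = d / c"
  have rho: "\<rho> > 0" unfolding \<rho>_def using d cpos by simp
  define U where "U i = ball (w1 i) \<rho>" for i
  define Bx where "Bx = {\<omega> \<in> space S. \<forall>i<L. \<omega> i \<in> U i}"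
  have Bx_small: "opnorm (prod_mat \<omega> L) < 1 / (2 * Kr)" if "\<omega> \<in> Bx" for \<omega>
  proof -
    have "opnorm (\<omega> i - w1 i) < d" if "i < L" for i
    proof -
      have "dist (w1 i) (\<omega> i) < \<rho>" using \<open>\<omega> \<in> Bx\<close> that unfolding Bx_def U_def by auto
      then have "norm (\<omega> i - w1 i) < \<rho>" by (simp add: dist_norm norm_minus_commute)
      then have "c * norm (\<omega> i - w1 i) < c * \<rho>" using cpos by simp
      also have "c * \<rho> = d" unfolding \<rho>_def using cpos by simp
      finally show ?thesis using opn[of "\<omega> i - w1 i"] by linarith
    qed
    then have "opnorm (prod_mat \<omega> L - prod_mat w1 L) < 1 / (4 * Kr)" by (intro dclose) auto
    moreover have "opnorm (prod_mat \<omega> L) \<le> opnorm (prod_mat w1 L) + opnorm (prod_mat \<omega> L - prod_mat w1 L)"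
      by (rule opnorm_diff)
    moreover have "1 / (4 * Kr) + 1 / (4 * Kr) = 1 / (2 * Kr)" by (simp add: field_simps)
    ultimately show ?thesis using w1L by linarith
  qed
  have Bxs[measurable]: "Bx \<in> sets S"
  proof -
    have pre: "(\<lambda>\<omega>. \<omega> i) -` U i \<inter> space S \<in> sets S" for i
      unfolding U_def by (rule measurable_sets[OF mcomp[of i]]) simp
    then have pre2: "(\<lambda>\<omega>. \<omega> i) -` U i \<in> sets S" for i using spS by simp
    have ne: "{..<L} \<noteq> {}" using L1 lessThan_empty_iff by (metis not_one_le_zero)
    have "Bx = (\<Inter>i\<in>{..<L}. (\<lambda>\<omega>. \<omega> i) -` U i)"
      unfolding Bx_def spS using L1 by auto
    also have "\<dots> \<in> sets S"
      using pre2 ne by (intro sets.finite_INT) auto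
    finally show ?thesis .
  qed
  have Bxpos: "measure S Bx > 0"
  proof -
    have Ui: "measure \<nu> (U i) > 0" for i
    proof -
      have "w1 i \<in> mat_support \<nu>" unfolding w1_def by (rule w0)
      then have "emeasure \<nu> (U i) > 0" unfolding mat_support_def U_def using rho by auto
      then show ?thesis by (simp add: M.emeasure_eq_measure)
    qed
    have Us: "U i \<in> sets \<nu>" for i unfolding U_def sb by simp
    have "Bx = prod_emb UNIV (\<lambda>_. \<nu>) {..<L} (Pi\<^sub>E {..<L} U)"
      unfolding Bx_def prod_emb_def spS spnu PiE_UNIV by (auto simp only: restrict_PiE_iff vimage_def Int_UNIV_right lessThan_iff)
    then have "emeasure S Bx = (\<Prod>i\<in>{..<L}. emeasure \<nu> (U i))"
      using Us by (simp add: emeasure_PiM_emb)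
    also have "\<dots> = (\<Prod>i\<in>{..<L}. ennreal (measure \<nu> (U i)))"
      by (simp add: M.emeasure_eq_measure)
    also have "\<dots> = ennreal (\<Prod>i\<in>{..<L}. measure \<nu> (U i))"
      by (rule prod_ennreal) simp
    finally have "measure S Bx = (\<Prod>i\<in>{..<L}. measure \<nu> (U i))"
      by (simp add: emeasure_eq_measure prod_nonneg)
    then show ?thesis using Ui by (simp add: prod_pos)
  qed
  have sp1: "measure S (space S) = 1" by (rule P.prob_space)
  have emfin: "emeasure S X < \<infinity>" for X by (simp add: P.emeasure_eq_measure)
  have Bxpre: "a \<in> Bx \<longleftrightarrow> b \<in> Bx" if "\<And>i. i < L \<Longrightarrow> a i = b i" for a b
    unfolding Bx_def spS using that by auto
  define H where "H = {\<omega> \<in> space S. \<omega> \<in> Bx \<and> shft L \<omega> \<in> G K}"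
  have Hs[measurable]: "H \<in> sets S" unfolding H_def by measurable
  have "measure (iid \<nu>) {\<omega> \<in> space (iid \<nu>). \<omega> \<in> Bx \<and> shft L \<omega> \<in> G K} = measure (iid \<nu>) Bx * measure (iid \<nu>) (G K)"
    by (rule split_measure[OF Pnu Bxs[folded SS] Bxpre Gs[folded SS]])
  then have Hm: "measure S H = measure S Bx * measure S (G K)" unfolding H_def SS .
  define s where "s = measure S H"
  have spos: "s > 0" unfolding s_def Hm using Bxpos gpos by simp
  have s1: "s \<le> 1" unfolding s_def by simp
  define Sel where "Sel j = {\<omega> \<in> space S. \<omega> \<in> space S \<and> shft j \<omega> \<in> H}" for j
  have Sels[measurable]: "Sel j \<in> sets S" for j unfolding Sel_def by measurable
  have Selm: "measure S (Sel j) = s" for j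
  proof -
    have "measure (iid \<nu>) {\<omega> \<in> space (iid \<nu>). \<omega> \<in> space (iid \<nu>) \<and> shft j \<omega> \<in> H} = measure (iid \<nu>) (space (iid \<nu>)) * measure (iid \<nu>) H"
      by (rule split_measure[OF Pnu sets.top _ Hs[folded SS]]) (simp add: SS spS)
    then show ?thesis unfolding Sel_def SS s_def by (simp add: P.prob_space)
  qed
  define cnt where "cnt N \<omega> = (\<Sum>j<N. indicator (Sel j) \<omega> :: real)" for N \<omega>
  have cnt_card: "cnt N \<omega> = real (card {j. j < N \<and> shft j \<omega> \<in> H})" for N \<omega>
  proof -
    have "cnt N \<omega> = (\<Sum>j<N. if shft j \<omega> \<in> H then 1 else 0)"
      unfolding cnt_def Sel_def spS by (intro sum.cong) (auto simp: indicator_def)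
    then show ?thesis using card_sum_ind by simp
  qed
  have cntm[measurable]: "cnt N \<in> borel_measurable S" for N unfolding cnt_def by measurable
  define D where "D N = {\<omega> \<in> space S. s * real N / 2 \<le> cnt N \<omega>}" for N
  have Ds[measurable]: "D N \<in> sets S" for N unfolding D_def by measurable
  have Dprob: "measure S (D N) \<ge> s / 2" for N
  proof (cases "N = 0")
    case True
    then have "D N = space S" unfolding D_def cnt_def by auto
    then show ?thesis using s1 by (simp add: P.prob_space)
  next
    case False
    have int_cnt: "integral\<^sup>L S (cnt N) = real N * s"
    proof -
      have "integral\<^sup>L S (cnt N) = (\<Sum>j<N. integral\<^sup>L S (indicator (Sel j)))"
        unfolding cnt_def by (rule Bochner_Integration.integral_sum[where f="\<lambda>j \<omega>. (indicator (Sel j) \<omega> :: real)"]) (use emfin in auto)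
      also have "\<dots> = (\<Sum>j<N. s)" using Selm by simp
      finally show ?thesis by simp
    qed
    have cnt_int: "integrable S (cnt N)"
      unfolding cnt_def by (rule Bochner_Integration.integrable_sum[where f="\<lambda>j \<omega>. (indicator (Sel j) \<omega> :: real)"]) (use emfin in auto)
    have pw: "cnt N \<omega> \<le> real N * indicator (D N) \<omega> + s * real N / 2" for \<omega>
    proof (cases "\<omega> \<in> D N")
      case True
      have "cnt N \<omega> \<le> real N" unfolding cnt_card using card_le_N by simp
      moreover have "s * real N / 2 \<ge> 0" using spos by simp
      ultimately show ?thesis using True by simp
    next
      case False
      then show ?thesis unfolding D_def spS by simp
    qed
    have "real N * s \<le> integral\<^sup>L S (\<lambda>\<omega>. real N * indicator (D N) \<omega> + s * real N / 2)"
      unfolding int_cnt[symmetric] by (rule Bochner_Integration.integral_mono) (use emfin pw cnt_int in auto)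
    also have "\<dots> = real N * measure S (D N) + s * real N / 2"
    proof -
      have i1: "integral\<^sup>L S (\<lambda>\<omega>. real N * indicator (D N) \<omega>) = real N * measure S (D N)"
        using Ds[of N] by (simp add: Int_absorb2 sets.sets_into_space)
      have i2: "integral\<^sup>L S (\<lambda>\<omega>. s * real N / 2) = s * real N / 2"
        using sp1 by simp
      have "integral\<^sup>L S (\<lambda>\<omega>. real N * indicator (D N) \<omega> + s * real N / 2) =
            integral\<^sup>L S (\<lambda>\<omega>. real N * indicator (D N) \<omega>) + integral\<^sup>L S (\<lambda>\<omega>. s * real N / 2)"
        by (rule Bochner_Integration.integral_add) (use emfin in auto)
      then show ?thesis using i1 i2 by simp
    qed
    finally have "real N * (s / 2) \<le> real N * measure S (D N)" by (simp add: field_simps)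
    then show ?thesis using False by simp
  qed
  define E where "E M = (\<Union>N. D (M + N))" for M
  have Es: "E M \<in> sets S" for M unfolding E_def by measurable
  have Edec: "decseq E"
    unfolding decseq_Suc_iff E_def
  proof
    fix M show "(\<Union>N. D (Suc M + N)) \<subseteq> (\<Union>N. D (M + N))"
    proof
      fix x assume "x \<in> (\<Union>N. D (Suc M + N))"
      then obtain N where "x \<in> D (Suc M + N)" by blast
      moreover have "Suc M + N = M + Suc N" by simp
      ultimately show "x \<in> (\<Union>N. D (M + N))" by (metis UN_iff UNIV_I)
    qed
  qed
  have Eprob: "measure S (E M) \<ge> s / 2" for M
  proof -
    have "D M = D (M + 0)" by simp
    then have "D M \<subseteq> E M" unfolding E_def by blast
    then have "measure S (D M) \<le> measure S (E M)" by (intro P.finite_measure_mono Es)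
    then show ?thesis using Dprob[of M] by simp
  qed
  have lim: "(\<lambda>M. measure S (E M)) \<longlonglongrightarrow> measure S (\<Inter>M. E M)"
    by (rule P.finite_Lim_measure_decseq) (use Es Edec in auto)
  have Ipos: "measure S (\<Inter>M. E M) > 0"
    using LIMSEQ_le_const[OF lim, of "s / 2"] Eprob spos by force
  have sn: "AE w in S. (\<forall>n. opnorm (prod_mat w n) > 0) \<and> (\<lambda>n. ln (opnorm (prod_mat w n)) / real n) \<longlonglongrightarrow> 0"
    using assms(4) unfolding semi_neutral_def SS by blast
  have bd: "AE w in S. bounded (range (\<lambda>n. prod_mat w n))" using assms(5) unfolding SS .
  obtain \<omega> where \<omega>E: "\<omega> \<in> (\<Inter>M. E M)"
    and \<omega>pos: "\<forall>n. opnorm (prod_mat \<omega> n) > 0"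
    and \<omega>lim: "(\<lambda>n. ln (opnorm (prod_mat \<omega> n)) / real n) \<longlonglongrightarrow> 0"
    and \<omega>bd: "bounded (range (\<lambda>n. prod_mat \<omega> n))"
  proof -
    have "\<exists>\<omega>\<in>(\<Inter>M. E M). (\<forall>n. opnorm (prod_mat \<omega> n) > 0) \<and> (\<lambda>n. ln (opnorm (prod_mat \<omega> n)) / real n) \<longlonglongrightarrow> 0
       \<and> bounded (range (\<lambda>n. prod_mat \<omega> n))"
    proof (rule ccontr)
      assume "\<not> ?thesis"
      then have imp: "\<forall>w. ((\<forall>n. opnorm (prod_mat w n) > 0) \<and> (\<lambda>n. ln (opnorm (prod_mat w n)) / real n) \<longlonglongrightarrow> 0)
          \<and> bounded (range (\<lambda>n. prod_mat w n)) \<longrightarrow> \<not> (w \<in> (\<Inter>M. E M))" by blast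
      have "AE w in S. ((\<forall>n. opnorm (prod_mat w n) > 0) \<and> (\<lambda>n. ln (opnorm (prod_mat w n)) / real n) \<longlonglongrightarrow> 0)
          \<and> bounded (range (\<lambda>n. prod_mat w n))"
        using sn bd by (rule AE_conjI)
      then have "AE w in S. \<not> (w \<in> (\<Inter>M. E M))"
        by (rule AE_mp) (use imp in \<open>intro AE_I2, blast\<close>)
      then have "emeasure S {w \<in> space S. w \<in> (\<Inter>M. E M)} = 0" by (rule emeasure_eq_0_AE)
      moreover have "{w \<in> space S. w \<in> (\<Inter>M. E M)} = (\<Inter>M. E M)" unfolding spS by blast
      ultimately have "emeasure S (\<Inter>M. E M) = 0" by simp
      then have "measure S (\<Inter>M. E M) = 0" by (simp add: measure_def)
      then show False using Ipos by simp
    qed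
    then show ?thesis using that by blast
  qed
  obtain a where a: "\<And>n. norm (prod_mat \<omega> n) \<le> a" using \<omega>bd unfolding bounded_iff by auto
  define f where "f N = opnorm (prod_mat \<omega> N)" for N
  define sel where "sel j = (shft j \<omega> \<in> H)" for j
  show False
  proof (rule det_contra[of L f "c * a" sel s])
    show "1 \<le> L" by (rule L1)
    show "0 < f N" for N unfolding f_def using \<omega>pos by simp
    show "f N \<le> c * a" for N unfolding f_def using opn[of "prod_mat \<omega> N"] a[of N] cpos
      by (meson mult_left_mono less_imp_le order_trans)
    show "0 < s" by (rule spos)
    show "(\<lambda>N. ln (f N) / real N) \<longlonglongrightarrow> 0" unfolding f_def by (rule \<omega>lim)
    show "\<exists>N\<ge>M. s * real N / 2 \<le> real (card {j. j < N \<and> sel j})" for M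
    proof -
      obtain N where "\<omega> \<in> D (M + N)" using \<omega>E unfolding E_def by auto
      then show ?thesis unfolding D_def cnt_card sel_def by (intro exI[of _ "M + N"]) auto
    qed
    show "f N \<le> f j / 2" if sj: "sel j" and jl: "j + L \<le> N" for j N
    proof -
      obtain t where t: "N = j + (L + t)" using jl by (metis add.assoc le_add_diff_inverse)
      define \<omega>' where "\<omega>' = shft j \<omega>"
      have H\<omega>: "\<omega>' \<in> H" using sj unfolding sel_def \<omega>'_def .
      have e1: "prod_mat \<omega> N = prod_mat (shft L \<omega>') t ** prod_mat \<omega>' L ** prod_mat \<omega> j"
        unfolding t prod_mat_add[of \<omega> j] \<omega>'_def prod_mat_add[of "shft j \<omega>" L] ..
      have b1: "opnorm (prod_mat (shft L \<omega>') t) \<le> Kr" using H\<omega> unfolding H_def G_def Kr_def by auto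
      have b2: "opnorm (prod_mat \<omega>' L) \<le> 1 / (2 * Kr)" using Bx_small[of \<omega>'] H\<omega> unfolding H_def by auto
      have "f N \<le> opnorm (prod_mat (shft L \<omega>') t ** prod_mat \<omega>' L) * f j"
        unfolding f_def e1 by (rule opnorm_mult)
      also have "opnorm (prod_mat (shft L \<omega>') t ** prod_mat \<omega>' L) \<le> Kr * (1 / (2 * Kr))"
        using opnorm_mult b1 b2 opnorm_nonneg Kr by (meson mult_mono order_trans less_le_trans zero_less_one less_imp_le)
      then have "opnorm (prod_mat (shft L \<omega>') t ** prod_mat \<omega>' L) * f j \<le> Kr * (1 / (2 * Kr)) * f j"
        using opnorm_nonneg unfolding f_def by (intro mult_right_mono) auto
      also have "Kr * (1 / (2 * Kr)) * f j = f j / 2" using Kr by simp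
      finally show ?thesis by simp
    qed
  qed
qed

end
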